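(* Let $n$ be a nonnegative integer and $a,c\in\mathbb{C}$ such that all expressions below are defined (no lower parameter zero or a negative integer). Then \[ {}_3F_2\!\left(\left.{-n,a,c \atop \frac{a-n}{2},\frac{1+a-n}{2}}\right| \frac{1}{4}\right) =\frac{(1+2c-a)_n}{(1-a)_n}\,{}_3F_2\!\left(\left.{-n,1+2c-a+n,c \atop \frac{1+2c-a}{2},\frac{2+2c-a}{2}}\right| \frac{1}{4}\right). \] Equivalently, with $M_n(a,c)=(1-a)_n(1+c-a)_n\,{}_3F_2\!\left(\left.{-n,a,c \atop \frac{a-n}{2},\frac{1+a-n}{2}}\right| \frac{1}{4}\right)$ one has $M_n(a,c)=M_n(1+2c-a+n,c)$, and $L_n(x,y)=M_n\!\left(x,\frac{x+y-n-1}{2}\right)$ satisfies $L_n(x,y)=L_n(y,x)$.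
   Context: For $a\in\mathbb{C}$, $(a)_0=1$ and $(a)_k=a(a+1)\cdots(a+k-1)$ for $k\ge1$. The hypergeometric series is ${}_rF_s\!\left(\left.{\alpha_1,\ldots,\alpha_r\atop \beta_1,\ldots,\beta_s}\right|z\right)=\sum_{k\ge0}\frac{(\alpha_1)_k\cdots(\alpha_r)_k}{k!(\beta_1)_k\cdots(\beta_s)_k}z^k$, with no lower parameter zero or a negative integer; when an upper parameter is $-n$ it is a finite sum over $0\le k\le n$. *)

theory Defs
  imports Complex_Main "HOL-Library.Nonpos_Ints"
begin

definition hyp3F2_term ::
  "complex \<Rightarrow> complex \<Rightarrow> complex \<Rightarrow> complex \<Rightarrow> complex \<Rightarrow> complex \<Rightarrow> nat \<Rightarrow> complex" where
  "hyp3F2_term a1 a2 a3 b1 b2 z k =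
     pochhammer a1 k * pochhammer a2 k * pochhammer a3 k
     / (fact k * pochhammer b1 k * pochhammer b2 k) * z ^ k"

definition term3F2 ::
  "nat \<Rightarrow> complex \<Rightarrow> complex \<Rightarrow> complex \<Rightarrow> complex \<Rightarrow> complex \<Rightarrow> complex" where
  "term3F2 n a2 a3 b1 b2 z = (\<Sum>k\<le>n. hyp3F2_term (- of_nat n) a2 a3 b1 b2 z k)"

end

theory Submission imports Defs "HOL-Computational_Algebra.Formal_Power_Series" begin

lemma ode_unique:
  fixes F G P Q :: "complex fps"
  assumes "P * fps_deriv F = Q * F" "P * fps_deriv G = Q * G" "fps_nth P 0 \<noteq> 0" "fps_nth F 0 = fps_nth G 0"
  shows "F = G"
proof -
  define D where "D = F - G"
  have "P * fps_deriv D = Q * D" using assms(1,2) by (simp add: D_def algebra_simps)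
  hence "inverse P * P * fps_deriv D = inverse P * Q * D" by (simp add: mult.assoc)
  hence dD: "fps_deriv D = (inverse P * Q) * D" using assms(3) by (simp add: inverse_mult_eq_1)
  have D0: "fps_nth D 0 = 0" using assms(4) by (simp add: D_def)
  have "\<forall>m\<le>n. fps_nth D m = 0" for n
  proof (induction n)
    case 0 then show ?case using D0 by simp
  next
    case (Suc n)
    have "fps_nth (fps_deriv D) n = fps_nth ((inverse P * Q) * D) n" using dD by simp
    also have "\<dots> = 0" unfolding fps_mult_nth using Suc by (intro sum.neutral) auto
    finally have "fps_nth D (Suc n) = 0" by (simp del: of_nat_Suc)
    with Suc show ?case by (auto simp: le_Suc_eq)
  qed
  hence "D = 0" by (auto simp: fps_eq_iff)
  thus ?thesis by (simp add: D_def)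
qed

lemma binom_ode: "(1 + fps_X) * fps_deriv (fps_binomial b) = fps_const (b::complex) * fps_binomial b"
  by (simp add: fps_eq_iff algebra_simps gbinomial_mult_1 field_simps)

lemma Bcomp_deriv:
  fixes f :: "complex fps"
  assumes "fps_nth f 0 = 0"
  shows "(1 + f) * fps_deriv (fps_binomial b oo f) = fps_const b * fps_deriv f * (fps_binomial b oo f)"
proof -
  have "(1 + f) * fps_deriv (fps_binomial b oo f) = ((1+fps_X) oo f) * (fps_deriv (fps_binomial b) oo f) * fps_deriv f"
    using assms by (simp add: fps_compose_deriv fps_compose_add_distrib mult.assoc)
  also have "\<dots> = (((1+fps_X) * fps_deriv (fps_binomial b)) oo f) * fps_deriv f"
    using assms by (simp add: fps_compose_mult_distrib)
  also have "\<dots> = fps_const b * fps_deriv f * (fps_binomial b oo f)"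
    by (simp add: binom_ode fps_const_mult_apply_left[symmetric])
  finally show ?thesis .
qed


definition Eb :: "complex \<Rightarrow> complex fps" where
  "Eb b = fps_binomial b oo (- fps_X)"

lemma Eb_deriv: "(1 - fps_X) * fps_deriv (Eb b) = fps_const (- b) * Eb b"
  using Bcomp_deriv[of "- fps_X" b] by (simp add: Eb_def)

lemma Eb_add: "Eb (b + d) = Eb b * Eb d"
  by (simp add: Eb_def fps_binomial_add_mult fps_compose_mult_distrib)

lemma Eb_0: "Eb 0 = 1"
  by (simp add: Eb_def)

lemma Eb_nat: "Eb (of_nat k) = (1 - fps_X) ^ k"
  by (simp add: Eb_def fps_binomial_of_nat fps_compose_power[symmetric] fps_compose_add_distrib)

lemma Eb_pow: "Eb b ^ j = Eb (of_nat j * b)"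
  by (simp add: Eb_def fps_compose_power fps_binomial_power)

lemma Eb_nth: "fps_nth (Eb b) m = (-1) ^ m * (b gchoose m)"
  by (simp add: Eb_def fps_compose_uminus')

lemma Eb_inv2: "(1 - fps_X) ^ 2 * Eb (-2) = 1"
proof -
  have "(1 - fps_X) ^ 2 * Eb (-2) = Eb (of_nat 2) * Eb (-2)" by (simp only: Eb_nat)
  also have "\<dots> = Eb 0" by (simp add: Eb_add[symmetric])
  finally show ?thesis by (simp add: Eb_0)
qed


lemma key_fps:
  fixes c :: complex
  shows "Eb (2*c) * (fps_binomial (-c) oo (fps_X^2 - fps_X)) = fps_binomial (-c) oo (fps_X * Eb (-2))"
proof -
  define A :: "complex fps" where "A = fps_X^2 - fps_X"
  define W where "W = fps_X * Eb (-2)"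
  define G where "G = fps_binomial (-c) oo A"
  define H2 where "H2 = fps_binomial (-c) oo W"
  define P :: "complex fps" where "P = (1 - fps_X) * (1 - fps_X + fps_X^2)"
  define Q where "Q = fps_const (-c) * (1 + fps_X)"
  have A0: "fps_nth A 0 = 0" by (simp add: A_def)
  have W0: "fps_nth W 0 = 0" by (simp add: W_def)
  have dA: "fps_deriv A = 2 * fps_X - 1" by (simp add: A_def fps_deriv_power numeral_fps_const)
  have gG: "(1 + A) * fps_deriv G = fps_const (-c) * fps_deriv A * G"
    unfolding G_def using Bcomp_deriv[OF A0] .
  have eE: "(1 - fps_X) * fps_deriv (Eb (2*c)) = fps_const (- (2*c)) * Eb (2*c)" by (rule Eb_deriv)
  have c2: "fps_const (- (2*c)) = 2 * fps_const (-c)"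
    by (metis fps_const_mult fps_const_neg mult_minus_right numeral_fps_const)
  have 1: "P * fps_deriv (Eb (2*c) * G) = Q * (Eb (2*c) * G)"
  proof -
    have "P * fps_deriv (Eb (2*c) * G) = (1 + A) * ((1 - fps_X) * fps_deriv (Eb (2*c))) * G
          + (1 - fps_X) * Eb (2*c) * ((1 + A) * fps_deriv G)"
      by (simp add: P_def A_def algebra_simps)
    also have "\<dots> = (1 + A) * (fps_const (- (2*c)) * Eb (2*c)) * G
          + (1 - fps_X) * Eb (2*c) * (fps_const (-c) * (2 * fps_X - 1) * G)"
      by (simp only: eE gG dA)
    also have "\<dots> = Q * (Eb (2*c) * G)"
      unfolding c2 by (simp add: Q_def A_def algebra_simps power2_eq_square)
    finally show ?thesis .
  qed
  have u: "(1 - fps_X) ^ 2 * Eb (-2) = 1" by (rule Eb_inv2)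
  have v: "(1 - fps_X) * fps_deriv (Eb (-2)) = 2 * Eb (-2)"
    using Eb_deriv[of "-2"] by (simp add: numeral_fps_const)
  have hW: "(1 + W) * fps_deriv H2 = fps_const (-c) * fps_deriv W * H2"
    unfolding H2_def using Bcomp_deriv[OF W0] .
  have PW: "P = (1 - fps_X)^3 * (1 + W)"
  proof -
    have "(1 - fps_X)^3 * (1 + W) = (1 - fps_X)^3 + (1 - fps_X) * fps_X * ((1 - fps_X) ^ 2 * Eb (-2))"
      by (simp add: W_def algebra_simps power2_eq_square power3_eq_cube)
    also have "\<dots> = P" by (simp only: u) (simp add: P_def algebra_simps power2_eq_square power3_eq_cube)
    finally show ?thesis by simp
  qed
  have dW: "(1 - fps_X)^3 * fps_deriv W = 1 + fps_X"
  proof -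
    have "(1 - fps_X)^3 * fps_deriv W = (1 - fps_X) * ((1 - fps_X) ^ 2 * Eb (-2))
        + fps_X * (1 - fps_X)^2 * ((1 - fps_X) * fps_deriv (Eb (-2)))"
      by (simp add: W_def algebra_simps power2_eq_square power3_eq_cube)
    also have "\<dots> = (1 - fps_X) * ((1 - fps_X) ^ 2 * Eb (-2)) + 2 * fps_X * ((1 - fps_X) ^ 2 * Eb (-2))"
      by (simp only: v) (simp add: mult_ac)
    also have "\<dots> = 1 + fps_X" by (simp only: u) simp
    finally show ?thesis .
  qed
  have 2: "P * fps_deriv H2 = Q * H2"
  proof -
    have "P * fps_deriv H2 = (1 - fps_X)^3 * ((1 + W) * fps_deriv H2)" by (simp add: PW mult.assoc)
    also have "\<dots> = fps_const (-c) * ((1 - fps_X)^3 * fps_deriv W) * H2"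
      by (simp only: hW) (simp add: algebra_simps)
    also have "\<dots> = Q * H2" by (simp add: dW Q_def)
    finally show ?thesis .
  qed
  have "Eb (2*c) * G = H2"
    by (rule ode_unique[OF 1 2]) (simp_all add: P_def H2_def G_def Eb_def)
  thus ?thesis by (simp add: G_def H2_def A_def W_def)
qed


lemma compose_coeff:
  fixes F B g :: "complex fps"
  assumes g0: "fps_nth g 0 = 0"
  shows "fps_nth (F * (B oo g)) n = (\<Sum>i\<le>n. fps_nth B i * fps_nth (F * g^i) n)"
proof -
  have z: "fps_nth (g^i) m = 0" if "m < i" for i m
    using startsby_zero_power_prefix[OF g0] that by blast
  have "fps_nth (F * (B oo g)) n = (\<Sum>j=0..n. fps_nth F j * (\<Sum>i=0..n-j. fps_nth B i * fps_nth (g^i) (n-j)))"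
    by (simp add: fps_mult_nth fps_compose_nth)
  also have "\<dots> = (\<Sum>j=0..n. fps_nth F j * (\<Sum>i\<le>n. fps_nth B i * fps_nth (g^i) (n-j)))"
  proof -
    have aux: "(\<Sum>i=0..n-j. fps_nth B i * fps_nth (g^i) (n-j)) = (\<Sum>i\<le>n. fps_nth B i * fps_nth (g^i) (n-j))" for j
      by (rule sum.mono_neutral_left) (auto simp: z)
    show ?thesis by (simp only: aux)
  qed
  also have "\<dots> = (\<Sum>i\<le>n. fps_nth B i * fps_nth (F * g^i) n)"
  proof -
    have "(\<Sum>j=0..n. fps_nth F j * (\<Sum>i\<le>n. fps_nth B i * fps_nth (g^i) (n-j)))
        = (\<Sum>j=0..n. \<Sum>i\<le>n. fps_nth B i * (fps_nth F j * fps_nth (g^i) (n-j)))"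
      by (simp add: sum_distrib_left mult_ac)
    also have "\<dots> = (\<Sum>i\<le>n. \<Sum>j=0..n. fps_nth B i * (fps_nth F j * fps_nth (g^i) (n-j)))"
      by (rule sum.swap)
    also have "\<dots> = (\<Sum>i\<le>n. fps_nth B i * fps_nth (F * g^i) n)"
      by (simp add: fps_mult_nth sum_distrib_left)
    finally show ?thesis .
  qed
  finally show ?thesis .
qed

lemma coeff_identity:
  fixes a c :: complex and n :: nat
  shows "(\<Sum>k\<le>n. ((-c) gchoose k) * (-1)^k * (-1)^(n-k) * ((a-1+of_nat k) gchoose (n-k)))
       = (\<Sum>k\<le>n. ((-c) gchoose k) * (-1)^(n-k) * ((a-1-2*c-2*of_nat k) gchoose (n-k)))"
proof -
  define A :: "complex fps" where "A = fps_X^2 - fps_X"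
  define W where "W = fps_X * Eb (-2)"
  have A0: "fps_nth A 0 = 0" by (simp add: A_def)
  have W0: "fps_nth W 0 = 0" by (simp add: W_def)
  have e: "Eb (a-1) * (fps_binomial (-c) oo A) = Eb (a-1-2*c) * (fps_binomial (-c) oo W)"
  proof -
    have "Eb (a-1) = Eb (a-1-2*c) * Eb (2*c)" by (simp add: Eb_add[symmetric])
    thus ?thesis using key_fps[of c] by (simp add: A_def W_def mult.assoc)
  qed
  have L: "fps_nth (Eb (a-1) * A^k) n = (-1)^k * (-1)^(n-k) * ((a-1+of_nat k) gchoose (n-k))" if "k \<le> n" for k
  proof -
    have "A = fps_const (-1) * (fps_X * (1 - fps_X))" by (simp add: A_def algebra_simps power2_eq_square fps_const_neg[symmetric] del: fps_const_neg)
    hence "A^k = fps_const ((-1)^k) * (fps_X^k * (1 - fps_X)^k)"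
      by (simp only: power_mult_distrib fps_const_power)
    hence "A^k = fps_const ((-1)^k) * (fps_X^k * Eb (of_nat k))" by (simp add: Eb_nat)
    hence "Eb (a-1) * A^k = fps_const ((-1)^k) * (fps_X^k * (Eb (a-1) * Eb (of_nat k)))"
      by (simp add: mult_ac)
    also have "\<dots> = fps_const ((-1)^k) * (fps_X^k * Eb (a-1+of_nat k))" by (simp add: Eb_add)
    finally show ?thesis using that by (simp add: fps_X_power_mult_nth Eb_nth)
  qed
  have R: "fps_nth (Eb (a-1-2*c) * W^k) n = (-1)^(n-k) * ((a-1-2*c-2*of_nat k) gchoose (n-k))" if "k \<le> n" for k
  proof -
    have "Eb (a-1-2*c) * W^k = fps_X^k * (Eb (a-1-2*c) * Eb (of_nat k * (-2)))"
      by (simp add: W_def power_mult_distrib Eb_pow mult_ac)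
    also have "\<dots> = fps_X^k * Eb (a-1-2*c-2*of_nat k)" by (simp add: Eb_add[symmetric] algebra_simps)
    finally show ?thesis using that by (simp add: fps_X_power_mult_nth Eb_nth)
  qed
  have "fps_nth (Eb (a-1) * (fps_binomial (-c) oo A)) n = fps_nth (Eb (a-1-2*c) * (fps_binomial (-c) oo W)) n"
    by (simp only: e)
  hence "(\<Sum>k\<le>n. ((-c) gchoose k) * fps_nth (Eb (a-1) * A^k) n) = (\<Sum>k\<le>n. ((-c) gchoose k) * fps_nth (Eb (a-1-2*c) * W^k) n)"
    unfolding compose_coeff[OF A0] compose_coeff[OF W0] by simp
  moreover have "(\<Sum>k\<le>n. ((-c) gchoose k) * fps_nth (Eb (a-1) * A^k) n) = (\<Sum>k\<le>n. ((-c) gchoose k) * (-1)^k * (-1)^(n-k) * ((a-1+of_nat k) gchoose (n-k)))"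
    by (intro sum.cong refl) (simp add: L mult.assoc)
  moreover have "(\<Sum>k\<le>n. ((-c) gchoose k) * fps_nth (Eb (a-1-2*c) * W^k) n) = (\<Sum>k\<le>n. ((-c) gchoose k) * (-1)^(n-k) * ((a-1-2*c-2*of_nat k) gchoose (n-k)))"
    by (intro sum.cong refl) (simp add: R mult.assoc)
  ultimately show ?thesis by simp
qed


lemma sq_m1: "((-1::complex)^k) * (-1)^k = 1"
  by (simp add: power_add[symmetric] power_mult_distrib[symmetric] mult_2[symmetric] power_mult)

lemma poch_neg_nat:
  assumes "k \<le> n"
  shows "pochhammer (- of_nat n :: complex) k = (-1)^k * fact n / fact (n-k)"
proof -
  have "(of_nat n :: complex) gchoose k = (-1)^k * pochhammer (- of_nat n) k / fact k"
    by (rule gbinomial_pochhammer)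
  moreover have "(of_nat n :: complex) gchoose k = fact n / (fact k * fact (n-k))"
    using assms by (simp add: binomial_gbinomial[symmetric] binomial_fact)
  ultimately have "(-1)^k * pochhammer (- of_nat n :: complex) k / fact k = fact n / (fact k * fact (n-k))" by simp
  hence "(-1)^k * pochhammer (- of_nat n :: complex) k = fact n / fact (n-k)"
    by (simp add: field_simps)
  hence "(-1)^k * ((-1)^k * pochhammer (- of_nat n :: complex) k) = (-1)^k * (fact n / fact (n-k))"
    by simp
  moreover have "(-1)^k * ((-1)^k * pochhammer (- of_nat n :: complex) k) = pochhammer (- of_nat n :: complex) k"
    by (simp only: mult.assoc[symmetric] sq_m1) simp
  ultimately show ?thesis by simp
qed

lemma poch_half:
  fixes z :: complex
  shows "pochhammer (z/2) k * pochhammer ((1+z)/2) k = pochhammer z (2*k) / 4^k"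
proof -
  have "pochhammer (2 * (z/2)) (2 * k) = of_nat (2^(2*k)) * pochhammer (z/2) k * pochhammer (z/2+1/2) k"
    by (rule pochhammer_double)
  moreover have "z/2 + 1/2 = (1+z)/2" by (simp add: field_simps)
  moreover have "(of_nat (2^(2*k)) :: complex) = 4^k" by (simp add: power_mult)
  ultimately show ?thesis by simp
qed

lemma gch_neg: "(x::complex) gchoose m = (-1)^m * pochhammer (-x) m / fact m"
  by (rule gbinomial_pochhammer)

lemma lhs_term:
  fixes a c :: complex
  assumes kn: "k \<le> n" and nz: "pochhammer (a - of_nat n) (2*k) \<noteq> 0"
  shows "pochhammer (1-a) n * hyp3F2_term (- of_nat n) a c ((a - of_nat n)/2) ((1 + a - of_nat n)/2) (1/4) k
       = fact n * (((-c) gchoose k) * (-1)^k * (-1)^(n-k) * ((a-1+of_nat k) gchoose (n-k)))"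
proof -
  have h1: "pochhammer ((a - of_nat n)/2) k * pochhammer ((1 + a - of_nat n)/2) k = pochhammer (a - of_nat n) (2*k) / 4^k"
    using poch_half[of "a - of_nat n" k] by (simp add: add_diff_eq)
  have h5: "pochhammer (1-a) n * pochhammer a k = (-1)^k * pochhammer (1-a-of_nat k) (n-k) * pochhammer (a - of_nat n) (2*k)"
  proof -
    have p1: "pochhammer (1-a) n = (-1)^n * pochhammer (a - of_nat n) n"
      using pochhammer_minus[of "a-1" n] by (simp add: algebra_simps)
    have p2: "pochhammer (1-a-of_nat k) (n-k) = (-1)^(n-k) * pochhammer (a + 2*of_nat k - of_nat n) (n-k)"
      using pochhammer_minus[of "a - 1 + of_nat k" "n-k"] kn by (simp add: algebra_simps of_nat_diff)
    have p3: "pochhammer (a - of_nat n) n * pochhammer a k = pochhammer (a - of_nat n) (n+k)"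
      by (simp add: pochhammer_product')
    have p4: "pochhammer (a - of_nat n) (2*k) * pochhammer (a + 2*of_nat k - of_nat n) (n-k) = pochhammer (a - of_nat n) (n+k)"
    proof -
      have "pochhammer (a - of_nat n) (2*k + (n-k)) = pochhammer (a - of_nat n) (2*k) * pochhammer (a - of_nat n + of_nat (2*k)) (n-k)"
        by (rule pochhammer_product')
      moreover have "a - of_nat n + of_nat (2*k) = a + 2*of_nat k - of_nat n" by simp
      moreover have "2*k + (n-k) = n+k" using kn by simp
      ultimately show ?thesis by (simp add: algebra_simps)
    qed
    have s: "(-1::complex)^n = (-1)^k * (-1)^(n-k)"
      using kn by (simp add: power_add[symmetric])
    show ?thesis
      using p1 p2 p3 p4 s sq_m1[of "n-k"] by (simp add: algebra_simps)
  qed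
  define Pd where "Pd = pochhammer (a - of_nat n) (2*k)"
  define Q where "Q = pochhammer (1-a-of_nat k) (n-k)"
  define pn where "pn = pochhammer (- of_nat n :: complex) k"
  define pa where "pa = pochhammer a k"
  define pc where "pc = pochhammer c k"
  define A1 where "A1 = pochhammer (1-a) n"
  define s where "s = ((-1::complex)^k)"
  define t where "t = ((-1::complex)^(n-k))"
  have ss: "s * s = 1" unfolding s_def by (rule sq_m1)
  have tt: "t * t = 1" unfolding t_def by (rule sq_m1)
  have h5': "A1 * pa = s * Q * Pd" using h5 by (simp add: A1_def pa_def s_def Q_def Pd_def)
  have pn': "pn = s * fact n / fact (n-k)" using poch_neg_nat[OF kn] by (simp add: pn_def s_def)
  have Pd0: "Pd \<noteq> 0" using nz by (simp add: Pd_def)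
  have den: "fact k * pochhammer ((a - of_nat n)/2) k * pochhammer ((1 + a - of_nat n)/2) k = fact k * Pd / 4^k"
    using h1 by (simp add: mult.assoc Pd_def)
  have alg1: "A * (x / (y / q^k') * (1/q)^k') = A * x / y" if "q^k' \<noteq> 0" for A x y q :: complex and k'
    using that by (simp add: power_one_over field_simps)
  have "pochhammer (1-a) n * hyp3F2_term (- of_nat n) a c ((a - of_nat n)/2) ((1 + a - of_nat n)/2) (1/4) k
      = A1 * (pn * pa * pc) / (fact k * Pd)"
    unfolding hyp3F2_term_def den A1_def pn_def pa_def pc_def
    by (subst alg1) (simp_all add: power_one_over)
  also have "\<dots> = pn * (A1 * pa) * pc / (fact k * Pd)" by (simp add: mult_ac)
  also have "\<dots> = fact n * pc * Q / (fact k * fact (n-k))"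
    unfolding h5' pn' using Pd0 by (simp add: field_simps ss)
  finally have L: "pochhammer (1-a) n * hyp3F2_term (- of_nat n) a c ((a - of_nat n)/2) ((1 + a - of_nat n)/2) (1/4) k
      = fact n * pc * Q / (fact k * fact (n-k))" .
  have g1: "(-c) gchoose k = s * pc / fact k" by (simp add: gch_neg s_def pc_def)
  have g2: "(a-1+of_nat k) gchoose (n-k) = t * Q / fact (n-k)"
    by (simp add: gch_neg Q_def t_def algebra_simps)
  have "fact n * (((-c) gchoose k) * (-1)^k * (-1)^(n-k) * ((a-1+of_nat k) gchoose (n-k)))
      = fact n * ((s * pc / fact k) * s * t * (t * Q / fact (n-k)))"
    unfolding g1 g2 s_def t_def by simp
  also have "\<dots> = fact n * pc * Q / (fact k * fact (n-k))"
    by (simp add: field_simps ss tt)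
  finally show ?thesis using L by simp
qed


lemma rhs_term:
  fixes a c :: complex
  assumes kn: "k \<le> n" and nz: "pochhammer (1 + 2*c - a) (2*k) \<noteq> 0"
  shows "pochhammer (1 + 2*c - a) n * hyp3F2_term (- of_nat n) (1 + 2*c - a + of_nat n) c ((1 + 2*c - a)/2) ((2 + 2*c - a)/2) (1/4) k
       = fact n * (((-c) gchoose k) * (-1)^(n-k) * ((a-1-2*c-2*of_nat k) gchoose (n-k)))"
proof -
  define d where "d = 1 + 2*c - a"
  have h1: "pochhammer (d/2) k * pochhammer ((2 + 2*c - a)/2) k = pochhammer d (2*k) / 4^k"
  proof -
    have e: "(1 + d)/2 = (2 + 2*c - a)/2" by (simp add: d_def algebra_simps)
    show ?thesis using poch_half[of d k] unfolding e .
  qed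
  define Pd where "Pd = pochhammer d (2*k)"
  define Q where "Q = pochhammer (d + 2*of_nat k) (n-k)"
  define pn where "pn = pochhammer (- of_nat n :: complex) k"
  define pd where "pd = pochhammer (d + of_nat n) k"
  define pc where "pc = pochhammer c k"
  define D1 where "D1 = pochhammer d n"
  define s where "s = ((-1::complex)^k)"
  define t where "t = ((-1::complex)^(n-k))"
  have ss: "s * s = 1" unfolding s_def by (rule sq_m1)
  have tt: "t * t = 1" unfolding t_def by (rule sq_m1)
  have h5: "D1 * pd = Pd * Q"
  proof -
    have p3: "pochhammer d (n+k) = D1 * pd" by (simp add: pochhammer_product' D1_def pd_def)
    have "pochhammer d (2*k + (n-k)) = pochhammer d (2*k) * pochhammer (d + of_nat (2*k)) (n-k)"
      by (rule pochhammer_product')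
    moreover have "2*k + (n-k) = n+k" using kn by simp
    ultimately have "pochhammer d (n+k) = Pd * Q" by (simp add: Pd_def Q_def)
    with p3 show ?thesis by simp
  qed
  have pn': "pn = s * fact n / fact (n-k)" using poch_neg_nat[OF kn] by (simp add: pn_def s_def)
  have Pd0: "Pd \<noteq> 0" using nz by (simp add: Pd_def d_def)
  have den: "fact k * pochhammer (d/2) k * pochhammer ((2 + 2*c - a)/2) k = fact k * Pd / 4^k"
    using h1 by (simp add: mult.assoc Pd_def)
  have alg1: "A * (x / (y / q^k') * (1/q)^k') = A * x / y" if "q^k' \<noteq> 0" for A x y q :: complex and k'
    using that by (simp add: power_one_over field_simps)
  have "pochhammer (1 + 2*c - a) n * hyp3F2_term (- of_nat n) (1 + 2*c - a + of_nat n) c ((1 + 2*c - a)/2) ((2 + 2*c - a)/2) (1/4) k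
      = D1 * (pn * pd * pc) / (fact k * Pd)"
    unfolding d_def[symmetric] hyp3F2_term_def den D1_def pn_def pd_def pc_def
    by (subst alg1) (simp_all add: power_one_over)
  also have "\<dots> = pn * (D1 * pd) * pc / (fact k * Pd)" by (simp add: mult_ac)
  also have "\<dots> = fact n * s * pc * Q / (fact k * fact (n-k))"
    unfolding h5 pn' using Pd0 by (simp add: field_simps)
  finally have L: "pochhammer (1 + 2*c - a) n * hyp3F2_term (- of_nat n) (1 + 2*c - a + of_nat n) c ((1 + 2*c - a)/2) ((2 + 2*c - a)/2) (1/4) k
      = fact n * s * pc * Q / (fact k * fact (n-k))" .
  have g1: "(-c) gchoose k = s * pc / fact k" by (simp add: gch_neg s_def pc_def)
  have g2: "(a-1-2*c-2*of_nat k) gchoose (n-k) = t * Q / fact (n-k)"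
    by (simp add: gch_neg Q_def t_def d_def algebra_simps)
  have "fact n * (((-c) gchoose k) * (-1)^(n-k) * ((a-1-2*c-2*of_nat k) gchoose (n-k)))
      = fact n * ((s * pc / fact k) * t * (t * Q / fact (n-k)))"
    unfolding g1 g2 s_def t_def by simp
  also have "\<dots> = fact n * s * pc * Q / (fact k * fact (n-k))"
    by (simp add: field_simps tt)
  finally show ?thesis using L by simp
qed


lemma poch_nz: "(z::complex) \<notin> \<int>\<^sub>\<le>\<^sub>0 \<Longrightarrow> pochhammer z k \<noteq> 0"
  by (auto simp: pochhammer_eq_0_iff)

lemma poch2_nz:
  assumes "(z::complex)/2 \<notin> \<int>\<^sub>\<le>\<^sub>0" "(1+z)/2 \<notin> \<int>\<^sub>\<le>\<^sub>0"
  shows "pochhammer z (2*k) \<noteq> 0"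
proof -
  have "pochhammer z (2*k) = 4^k * (pochhammer (z/2) k * pochhammer ((1+z)/2) k)"
    using poch_half[of z k] by simp
  thus ?thesis using poch_nz[OF assms(1)] poch_nz[OF assms(2)] by simp
qed

theorem mainTheorem14:
  fixes n :: nat and a c :: complex
  assumes "(a - of_nat n) / 2 \<notin> \<int>\<^sub>\<le>\<^sub>0"
      and "(1 + a - of_nat n) / 2 \<notin> \<int>\<^sub>\<le>\<^sub>0"
      and "(1 + 2 * c - a) / 2 \<notin> \<int>\<^sub>\<le>\<^sub>0"
      and "(2 + 2 * c - a) / 2 \<notin> \<int>\<^sub>\<le>\<^sub>0"
      and "pochhammer (1 - a) n \<noteq> 0"
  shows "term3F2 n a c ((a - of_nat n) / 2) ((1 + a - of_nat n) / 2) (1 / 4)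
       = pochhammer (1 + 2 * c - a) n / pochhammer (1 - a) n
         * term3F2 n (1 + 2 * c - a + of_nat n) c ((1 + 2 * c - a) / 2) ((2 + 2 * c - a) / 2) (1 / 4)"
proof -
  have nzL: "pochhammer (a - of_nat n) (2*k) \<noteq> 0" for k
    using poch2_nz[of "a - of_nat n" k] assms(1,2) by (simp add: add_diff_eq)
  have nzR: "pochhammer (1 + 2*c - a) (2*k) \<noteq> 0" for k
  proof -
    have "1 + (1 + 2*c - a) = 2 + 2*c - a" by simp
    thus ?thesis using poch2_nz[of "1 + 2*c - a" k] assms(3,4) by metis
  qed
  have L: "pochhammer (1 - a) n * term3F2 n a c ((a - of_nat n) / 2) ((1 + a - of_nat n) / 2) (1 / 4)
      = fact n * (\<Sum>k\<le>n. ((-c) gchoose k) * (-1)^k * (-1)^(n-k) * ((a-1+of_nat k) gchoose (n-k)))"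
    unfolding term3F2_def sum_distrib_left
    by (intro sum.cong refl) (simp add: lhs_term nzL)
  have R: "pochhammer (1 + 2*c - a) n * term3F2 n (1 + 2 * c - a + of_nat n) c ((1 + 2 * c - a) / 2) ((2 + 2 * c - a) / 2) (1 / 4)
      = fact n * (\<Sum>k\<le>n. ((-c) gchoose k) * (-1)^(n-k) * ((a-1-2*c-2*of_nat k) gchoose (n-k)))"
    unfolding term3F2_def sum_distrib_left
    by (intro sum.cong refl) (simp add: rhs_term nzR)
  have "pochhammer (1 - a) n * term3F2 n a c ((a - of_nat n) / 2) ((1 + a - of_nat n) / 2) (1 / 4)
      = pochhammer (1 + 2*c - a) n * term3F2 n (1 + 2 * c - a + of_nat n) c ((1 + 2 * c - a) / 2) ((2 + 2 * c - a) / 2) (1 / 4)"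
    unfolding L R coeff_identity ..
  thus ?thesis using assms(5) by (simp add: field_simps)
qed

end
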